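(* Let $r>0$ and let $f\in\mathcal S(\mathbb{R}^2)$. Let $g=\mathcal F f$ be its equidistant-detector fan-beam transform with source radius $r$, i.e. for $(s,\beta)\in\mathbb{R}\times\mathbb{R}$, $$g(s,\beta)=\int_0^\infty f\Big(r\theta_\beta+t\,\frac{s\theta_\beta^\perp-r\theta_\beta}{\|s\theta_\beta^\perp-r\theta_\beta\|_2}\Big)\,dt,\qquad \theta_\beta=(\cos\beta,\sin\beta),\ \theta_\beta^\perp=(-\sin\beta,\cos\beta).$$ Let $h^*\in\mathbb{R}$ and define the misaligned sinogram $\tilde g(s,\beta)=g(s-h^*,\beta)$. Define, for $s\in\mathbb{R}$, $$\tilde p(s)=\int_0^{2\pi}\tilde g(s,\beta)\,d\beta,\qquad w(s)=\int_0^{2\pi}\tilde g\Big(-s,\ \beta+\pi+2\arctan\frac{s}{r}\Big)\,d\beta .$$ Then $\tilde p(s)=w(s-2h^* )$ for all $s\in\mathbb{R}$.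
   Context: $\mathcal S(\mathbb{R}^2)$ denotes the Schwartz space of rapidly decreasing functions on $\mathbb{R}^2$. The fan-beam transform $g=\mathcal F f$ gives the integral of $f$ along the ray starting at the source point $r\theta_\beta$ and passing through the detector point $s\theta_\beta^\perp$ (the detector coordinate axis passes through the origin); the angle $\beta$ is the polar angle of the source direction, so $g$ and $\tilde g$ are $2\pi$-periodic in $\beta$. The translation $\tilde g(s,\beta)=g(s-h^*,\beta)$ models a shift of the center of rotation by the (unknown) amount $h^*$ along the detector. *)

theory Defs
  imports "HOL-Analysis.Analysis"
begin

definition dir_deriv :: "(real \<times> real) \<Rightarrow> ((real \<times> real) \<Rightarrow> real) \<Rightarrow> (real \<times> real) \<Rightarrow> real" where
  "dir_deriv v f x = deriv (\<lambda>t. f (x + t *\<^sub>R v)) 0"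

fun iter_partial :: "(real \<times> real) list \<Rightarrow> ((real \<times> real) \<Rightarrow> real) \<Rightarrow> (real \<times> real) \<Rightarrow> real" where
  "iter_partial [] f = f"
| "iter_partial (v # vs) f = dir_deriv v (iter_partial vs f)"

definition coord_dirs :: "(real \<times> real) set" where
  "coord_dirs = {(1,0), (0,1)}"

text \<open>Schwartz space S(R^2): all iterated partial derivatives exist and are
  (Frechet) differentiable everywhere (hence f is C^\<infinity>), and
  x1^m x2^n (\<partial>^\<alpha> f)(x) is bounded for all m, n, \<alpha>.\<close>
definition schwartz :: "((real \<times> real) \<Rightarrow> real) set" where
  "schwartz = {f. \<forall>vs. set vs \<subseteq> coord_dirs \<longrightarrow>
      (\<forall>x. iter_partial vs f differentiable (at x)) \<and>
      (\<forall>m n::nat. \<exists>C. \<forall>x. \<bar>(fst x) ^ m * (snd x) ^ n * iter_partial vs f x\<bar> \<le> C)}"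

definition theta :: "real \<Rightarrow> real \<times> real" where
  "theta b = (cos b, sin b)"

definition theta_perp :: "real \<Rightarrow> real \<times> real" where
  "theta_perp b = (- sin b, cos b)"

definition fanbeam :: "real \<Rightarrow> ((real \<times> real) \<Rightarrow> real) \<Rightarrow> real \<Rightarrow> real \<Rightarrow> real" where
  "fanbeam r f s b = integral {0..} (\<lambda>t. f (r *\<^sub>R theta b +
      t *\<^sub>R ((1 / norm (s *\<^sub>R theta_perp b - r *\<^sub>R theta b)) *\<^sub>R
             (s *\<^sub>R theta_perp b - r *\<^sub>R theta b))))"

end

theory Submission
  imports Defs "HOL-Probability.Sinc_Integral"
begin

definition rot :: "real \<Rightarrow> real \<times> real \<Rightarrow> real \<times> real" where
  "rot b p = (fst p * cos b - snd p * sin b, fst p * sin b + snd p * cos b)"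

definition vv :: "real \<Rightarrow> real \<Rightarrow> real \<Rightarrow> real \<times> real" where
  "vv r u t = (r * (1 - t / sqrt (u\<^sup>2 + r\<^sup>2)), t * u / sqrt (u\<^sup>2 + r\<^sup>2))"

lemma norm_rot: "norm (rot b p) = norm p"
proof -
  have e: "(fst p * cos b - snd p * sin b)\<^sup>2 + (fst p * sin b + snd p * cos b)\<^sup>2
        = (fst p)\<^sup>2 * ((sin b)\<^sup>2 + (cos b)\<^sup>2) + (snd p)\<^sup>2 * ((sin b)\<^sup>2 + (cos b)\<^sup>2)"
    by algebra
  have "norm (rot b p) = sqrt ((fst p * cos b - snd p * sin b)\<^sup>2 + (fst p * sin b + snd p * cos b)\<^sup>2)"
    unfolding rot_def norm_Pair by simp
  also have "\<dots> = sqrt ((fst p)\<^sup>2 + (snd p)\<^sup>2)" unfolding e by simp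
  also have "\<dots> = norm p" by (cases p) (simp add: norm_Pair)
  finally show ?thesis .
qed

lemma rot_add: "rot (a + b) p = rot a (rot b p)"
  by (simp add: rot_def cos_add sin_add algebra_simps)

lemma rot_polar: "rot b (rho * cos a, rho * sin a) = (rho * cos (b + a), rho * sin (b + a))"
  by (simp add: rot_def cos_add sin_add algebra_simps)

lemma norm_vv_neg: "norm (vv r (- u) t) = norm (vv r u t)"
  by (simp add: vv_def norm_Pair norm_prod_def power2_eq_square)

lemma norm_vv_sq:
  assumes "r > 0"
  shows "(norm (vv r u t))\<^sup>2 = t\<^sup>2 - 2 * (r\<^sup>2 / sqrt (u\<^sup>2 + r\<^sup>2)) * t + r\<^sup>2"
proof -
  define N where "N = sqrt (u\<^sup>2 + r\<^sup>2)"
  have N2: "N\<^sup>2 = u\<^sup>2 + r\<^sup>2" unfolding N_def by simp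
  have Npos: "N > 0" unfolding N_def using assms by (simp add: add_nonneg_pos)
  have "(norm (vv r u t))\<^sup>2 = (r * (1 - t / N))\<^sup>2 + (t * u / N)\<^sup>2"
    by (simp add: vv_def norm_Pair N_def power_divide power2_abs)
  also have "\<dots> = r\<^sup>2 - 2 * (r\<^sup>2 / N) * t + t\<^sup>2 * ((r\<^sup>2 + u\<^sup>2) / N\<^sup>2)"
    using Npos by (simp add: power2_eq_square field_simps)
  also have "\<dots> = t\<^sup>2 - 2 * (r\<^sup>2 / N) * t + r\<^sup>2"
  proof -
    have "u\<^sup>2 + r\<^sup>2 \<noteq> 0" using assms by (simp add: add_nonneg_pos)
    then show ?thesis using N2 assms by (simp add: add.commute)
  qed
  finally show ?thesis by (simp add: N_def)
qed

lemma norm_vv_ge: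
  assumes "r > 0" "t \<ge> 0"
  shows "(t - r)\<^sup>2 \<le> (norm (vv r u t))\<^sup>2"
proof -
  define N where "N = sqrt (u\<^sup>2 + r\<^sup>2)"
  have "r \<le> N" unfolding N_def using assms
    by (metis abs_of_pos le_add_same_cancel2 real_sqrt_abs real_sqrt_le_mono zero_le_power2)
  moreover have Npos: "N > 0" using assms \<open>r \<le> N\<close> by linarith
  ultimately have "r\<^sup>2 / N \<le> r" using assms by (simp add: field_simps power2_eq_square)
  then have "(r\<^sup>2 / N) * t \<le> r * t" using assms by (intro mult_right_mono) auto
  then have "2 * (r\<^sup>2 / N) * t \<le> 2 * r * t" by linarith
  then show ?thesis using norm_vv_sq[OF assms(1), of u t] unfolding N_def[symmetric]
    by (simp add: power2_eq_square algebra_simps)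
qed

lemma fanbeam_eq:
  assumes "r > 0"
  shows "fanbeam r f u b = integral {0..} (\<lambda>t. f (rot b (vv r u t)))"
proof -
  define N where "N = sqrt (u\<^sup>2 + r\<^sup>2)"
  have Npos: "N > 0" unfolding N_def using assms by (simp add: add_nonneg_pos)
  have nrm: "norm (u *\<^sub>R theta_perp b - r *\<^sub>R theta b) = N"
  proof -
    have "(- (u * sin b) - r * cos b)\<^sup>2 + (u * cos b - r * sin b)\<^sup>2 = u\<^sup>2 * ((sin b)\<^sup>2 + (cos b)\<^sup>2) + r\<^sup>2 * ((sin b)\<^sup>2 + (cos b)\<^sup>2)"
      by algebra
    then show ?thesis by (simp add: theta_def theta_perp_def norm_Pair norm_prod_def N_def)
  qed
  have Nc: "sqrt (r\<^sup>2 + u\<^sup>2) = N" by (simp add: N_def add.commute)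
  show ?thesis unfolding fanbeam_def nrm
    by (rule integral_cong) (simp add: theta_def theta_perp_def rot_def vv_def N_def[symmetric] Nc algebra_simps diff_divide_distrib)
qed

lemma periodic_nat:
  assumes "\<And>x. h (x + 2*pi) = (h x :: real)"
  shows "h (x + 2*pi*real n) = h x"
proof (induction n)
  case 0 then show ?case by simp
next
  case (Suc n)
  have "h (x + 2*pi*real (Suc n)) = h ((x + 2*pi*real n) + 2*pi)" by (simp add: algebra_simps)
  also have "\<dots> = h x" using assms Suc by simp
  finally show ?case .
qed

lemma periodic_int:
  assumes "\<And>x. h (x + 2*pi) = (h x :: real)"
  shows "h (x + 2*pi*real_of_int k) = h x"
proof (cases "k \<ge> 0")
  case True
  define n where "n = nat k"
  have "k = int n" using True unfolding n_def by simp
  then show ?thesis using periodic_nat[of h, OF assms] by simp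
next
  case False
  define n where "n = nat (- k)"
  have n: "k = - int n" using False unfolding n_def by simp
  have "h x = h ((x + 2*pi*real_of_int k) + 2*pi*real n)" by (simp add: n)
  also have "\<dots> = h (x + 2*pi*real_of_int k)" using periodic_nat[of h, OF assms] by blast
  finally show ?thesis by simp
qed

lemma periodic_shift_integral:
  fixes h :: "real \<Rightarrow> real"
  assumes cont: "continuous_on UNIV h" and per: "\<And>x. h (x + 2*pi) = h x"
  shows "integral {0..2*pi} (\<lambda>b. h (b + c)) = integral {0..2*pi} h"
proof -
  define k where "k = \<lfloor>c / (2*pi)\<rfloor>"
  define c0 where "c0 = c - 2*pi*real_of_int k"
  have "real_of_int k \<le> c / (2*pi)" "c / (2*pi) < real_of_int k + 1"
    unfolding k_def by linarith+
  then have c0: "0 \<le> c0" "c0 \<le> 2*pi" unfolding c0_def using pi_gt_zero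
    by (auto simp: field_simps)
  have "\<And>b. h (b + c) = h (b + c0)"
    using periodic_int[of h, OF per, of "b + c0" k for b] unfolding c0_def by (simp add: algebra_simps)
  then have "integral {0..2*pi} (\<lambda>b. h (b + c)) = integral {0..2*pi} (\<lambda>b. h (b + c0))" by simp
  also have "\<dots> = integral {c0..2*pi+c0} h"
    using integral_shift_real_ivl[of c0 c0 "2*pi+c0" h] by simp
  also have "\<dots> = integral {c0..2*pi} h + integral {2*pi..2*pi+c0} h"
    by (rule Henstock_Kurzweil_Integration.integral_combine[symmetric]) (use c0 in \<open>auto intro!: integrable_continuous_interval continuous_on_subset[OF cont]\<close>)
  also have "integral {2*pi..2*pi+c0} h = integral {0..c0} h"
    using integral_shift_real_ivl[of "2*pi" "2*pi" "2*pi+c0" h] per by simp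
  also have "integral {c0..2*pi} h + integral {0..c0} h = integral {0..2*pi} h"
    by (subst add.commute, rule Henstock_Kurzweil_Integration.integral_combine) (use c0 in \<open>auto intro!: integrable_continuous_interval continuous_on_subset[OF cont]\<close>)
  finally show ?thesis .
qed

definition circ_avg :: "(real \<times> real \<Rightarrow> real) \<Rightarrow> real \<Rightarrow> real" where
  "circ_avg f rho = integral {0..2*pi} (\<lambda>b. f (rho * cos b, rho * sin b))"

lemma circ_avg_shift:
  assumes "continuous_on UNIV f"
  shows "integral {0..2*pi} (\<lambda>b. f (rho * cos (b + c), rho * sin (b + c))) = circ_avg f rho"
  unfolding circ_avg_def
  by (rule periodic_shift_integral[where h = "\<lambda>b. f (rho * cos b, rho * sin b)"])
     (auto intro!: continuous_on_compose2[OF assms] continuous_intros)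

lemma circ_avg_abs:
  assumes "continuous_on UNIV f"
  shows "circ_avg f \<bar>rho\<bar> = circ_avg f rho"
proof (cases "rho \<ge> 0")
  case False
  have "circ_avg f \<bar>rho\<bar> = integral {0..2*pi} (\<lambda>b. f (rho * cos (b + pi), rho * sin (b + pi)))"
    using False unfolding circ_avg_def by simp
  also have "\<dots> = circ_avg f rho" by (rule circ_avg_shift[OF assms])
  finally show ?thesis .
qed simp

lemma rot_avg:
  assumes "continuous_on UNIV f"
  shows "integral {0..2*pi} (\<lambda>b. f (rot (b + c) p)) = circ_avg f (norm p)"
proof -
  obtain rho a where p: "p = (rho * cos a, rho * sin a)"
    using polar_Ex[of "fst p" "snd p"] by (metis prod.collapse)
  have np: "norm p = \<bar>rho\<bar>"
  proof -
    have e: "(rho * cos a)\<^sup>2 + (rho * sin a)\<^sup>2 = rho\<^sup>2 * ((sin a)\<^sup>2 + (cos a)\<^sup>2)" by algebra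
    have "norm p = sqrt ((rho * cos a)\<^sup>2 + (rho * sin a)\<^sup>2)"
      unfolding p norm_Pair by simp
    also have "\<dots> = sqrt (rho\<^sup>2)" unfolding e by simp
    finally show ?thesis by simp
  qed
  have "integral {0..2*pi} (\<lambda>b. f (rot (b + c) p)) =
        integral {0..2*pi} (\<lambda>b. f (rho * cos (b + (c + a)), rho * sin (b + (c + a))))"
    unfolding p rot_polar by (simp add: add.assoc)
  also have "\<dots> = circ_avg f rho" by (rule circ_avg_shift[OF assms])
  also have "\<dots> = circ_avg f (norm p)" using circ_avg_abs[OF assms] np by simp
  finally show ?thesis .
qed

lemma strip_fubini:
  fixes F :: "real \<Rightarrow> real \<Rightarrow> real" and m :: "real \<Rightarrow> real"
  assumes cont: "continuous_on UNIV (\<lambda>z. F (fst z) (snd z))"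
    and bnd: "\<And>b t. t \<ge> 0 \<Longrightarrow> \<bar>F b t\<bar> \<le> m t"
    and mint: "integrable lborel m"
  shows "integral {0..2*pi} (\<lambda>b. integral {0..} (F b))
       = (LINT t:{0..}|lborel. integral {0..2*pi} (\<lambda>b. F b t))"
proof -
  have mmeas[measurable]: "m \<in> borel_measurable borel"
    using borel_measurable_integrable[OF mint] by simp
  have contb0: "continuous_on UNIV (\<lambda>t. F (fst (b, t)) (snd (b, t)))" for b
    by (rule continuous_on_compose2[OF cont]) (auto intro: continuous_intros)
  have contb: "continuous_on UNIV (F b)" for b using contb0[of b] by simp
  have contt0: "continuous_on UNIV (\<lambda>b. F (fst (b, t)) (snd (b, t)))" for t
    by (rule continuous_on_compose2[OF cont]) (auto intro: continuous_intros)
  have contt: "continuous_on UNIV (\<lambda>b. F b t)" for t using contt0[of t] by simp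
  have Fmeas: "(\<lambda>t. F b t) \<in> borel_measurable borel" for b
    using contb by (intro borel_measurable_continuous_onI) (simp add: continuous_on_eq_continuous_within)
  define S where "S = {0..2*pi} \<times> {0::real..}"
  define g2 where "g2 b t = indicator {0..2*pi} b * (indicator {0..} t * F b t)" for b t :: real
  have g2S: "case_prod g2 = (\<lambda>z. indicator S z *\<^sub>R F (fst z) (snd z))"
    by (auto simp: g2_def S_def indicator_times fun_eq_iff)
  have Sb: "S \<in> sets borel" unfolding S_def
    by (intro borel_closed closed_Times) auto
  have g2meas: "case_prod g2 \<in> borel_measurable (lborel \<Otimes>\<^sub>M lborel)"
    unfolding lborel_prod measurable_lborel2 g2S
    by (rule borel_measurable_continuous_on_indicator[OF Sb continuous_on_subset[OF cont]]) simp
  define B where "B b t = indicator {0..2*pi} b * \<bar>m t\<bar>" for b t :: real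
  have Bint: "integrable (lborel \<Otimes>\<^sub>M lborel) (case_prod B)"
  proof (rule lborel_pair.Fubini_integrable)
    show "case_prod B \<in> borel_measurable (lborel \<Otimes>\<^sub>M lborel)"
      unfolding B_def by measurable
    have "(\<lambda>x. \<integral>y. norm (case_prod B (x, y)) \<partial>lborel) = (\<lambda>x. indicator {0..2*pi} x *\<^sub>R (\<integral>y. \<bar>m y\<bar> \<partial>lborel))"
      by (auto simp: B_def fun_eq_iff abs_mult split: split_indicator)
    moreover have "integrable lborel (\<lambda>x. indicator {0..2*pi} x *\<^sub>R (\<integral>y. \<bar>m y\<bar> \<partial>lborel))"
      by (rule borel_integrable_compact) auto
    ultimately show "integrable lborel (\<lambda>x. \<integral>y. norm (case_prod B (x, y)) \<partial>lborel)" by simp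
    show "AE x in lborel. integrable lborel (\<lambda>y. case_prod B (x, y))"
      using mint by (auto simp: B_def)
  qed
  have Gint: "integrable (lborel \<Otimes>\<^sub>M lborel) (case_prod g2)"
  proof (rule Bochner_Integration.integrable_bound[OF Bint g2meas])
    show "AE z in lborel \<Otimes>\<^sub>M lborel. norm (case_prod g2 z) \<le> norm (case_prod B z)"
      by (intro AE_I2) (auto simp: g2_def B_def split: split_indicator intro: order_trans[OF bnd abs_ge_self])
  qed
  have Fbint: "set_integrable lborel {0..} (F b)" for b
    unfolding set_integrable_def
  proof (rule Bochner_Integration.integrable_bound[OF integrable_abs[OF mint]])
    show "(\<lambda>x. indicator {0..} x *\<^sub>R F b x) \<in> borel_measurable lborel"
      using Fmeas[of b] by measurable
    show "AE x in lborel. norm (indicator {0..} x *\<^sub>R F b x) \<le> norm \<bar>m x\<bar>"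
      by (intro AE_I2) (auto split: split_indicator intro: order_trans[OF bnd abs_ge_self])
  qed
  have Ftint: "set_integrable lborel {0..2*pi} (\<lambda>b. F b t)" for t
    unfolding set_integrable_def
    by (rule borel_integrable_compact) (auto intro: continuous_on_subset[OF contt])
  have inner_b: "(\<integral>b. g2 b t \<partial>lborel) = indicator {0..} t * integral {0..2*pi} (\<lambda>b. F b t)" for t
  proof -
    have "(\<lambda>b. g2 b t) = (\<lambda>b. indicator {0..} t * (indicator {0..2*pi} b * F b t))"
      by (simp add: g2_def fun_eq_iff mult_ac)
    then have "(\<integral>b. g2 b t \<partial>lborel) = indicator {0..} t * (LINT b:{0..2*pi}|lborel. F b t)"
      by (simp add: set_lebesgue_integral_def integral_mult_right_zero)
    also have "\<dots> = indicator {0..} t * integral {0..2*pi} (\<lambda>b. F b t)"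
      using set_borel_integral_eq_integral(2)[OF Ftint] by simp
    finally show ?thesis .
  qed
  have inner_t: "(\<integral>t. g2 b t \<partial>lborel) = indicator {0..2*pi} b * integral {0..} (F b)" for b
  proof -
    have "(\<integral>t. g2 b t \<partial>lborel) = indicator {0..2*pi} b * (LINT t:{0..}|lborel. F b t)"
      by (simp add: g2_def set_lebesgue_integral_def)
    also have "\<dots> = indicator {0..2*pi} b * integral {0..} (F b)"
      using set_borel_integral_eq_integral(2)[OF Fbint] by simp
    finally show ?thesis .
  qed
  have Hint: "set_integrable lborel {0..2*pi} (\<lambda>b. integral {0..} (F b))"
    using lborel_pair.integrable_fst[OF Gint] unfolding inner_t set_integrable_def by simp
  have "integral {0..2*pi} (\<lambda>b. integral {0..} (F b)) = (LINT b:{0..2*pi}|lborel. integral {0..} (F b))"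
    using set_borel_integral_eq_integral(2)[OF Hint] by simp
  also have "\<dots> = (\<integral>b. \<integral>t. g2 b t \<partial>lborel \<partial>lborel)"
    unfolding inner_t by (simp add: set_lebesgue_integral_def)
  also have "\<dots> = (\<integral>t. \<integral>b. g2 b t \<partial>lborel \<partial>lborel)"
    using lborel_pair.Fubini_integral[OF Gint] by simp
  also have "\<dots> = (LINT t:{0..}|lborel. integral {0..2*pi} (\<lambda>b. F b t))"
    unfolding inner_b by (simp add: set_lebesgue_integral_def)
  finally show ?thesis .
qed

lemma key:
  fixes f :: "real \<times> real \<Rightarrow> real"
  assumes r: "r > 0" and fc: "continuous_on UNIV f"
    and fb: "\<And>x. \<bar>f x\<bar> \<le> K * inverse (1 + (norm x)\<^sup>2)"
  shows "integral {0..2*pi} (\<lambda>b. integral {0..} (\<lambda>t. f (rot (b + c) (vv r u t))))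
       = (LINT t:{0..}|lborel. circ_avg f (norm (vv r u t)))"
proof -
  have K0: "K \<ge> 0"
  proof -
    have "0 \<le> K * inverse (1 + (norm (0::real\<times>real))\<^sup>2)" using fb[of 0] by linarith
    then show ?thesis by simp
  qed
  have Nnz: "sqrt (u\<^sup>2 + r\<^sup>2) \<noteq> 0" using r by (simp add: add_nonneg_pos)
  have "integral {0..2*pi} (\<lambda>b. integral {0..} (\<lambda>t. f (rot (b + c) (vv r u t))))
       = (LINT t:{0..}|lborel. integral {0..2*pi} (\<lambda>b. f (rot (b + c) (vv r u t))))"
  proof (rule strip_fubini[where m = "\<lambda>t. K * inverse (1 + (t - r)\<^sup>2)"])
    show "continuous_on UNIV (\<lambda>z. f (rot (fst z + c) (vv r u (snd z))))"
      unfolding rot_def vv_def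
      by (rule continuous_on_compose2[OF fc]) (use r in \<open>auto intro!: continuous_intros simp: Nnz\<close>)
    show "\<bar>f (rot (b + c) (vv r u t))\<bar> \<le> K * inverse (1 + (t - r)\<^sup>2)" if "t \<ge> 0" for b t
    proof -
      have "(t - r)\<^sup>2 \<le> (norm (rot (b + c) (vv r u t)))\<^sup>2"
        unfolding norm_rot using norm_vv_ge[OF r that] .
      then have "inverse (1 + (norm (rot (b + c) (vv r u t)))\<^sup>2) \<le> inverse (1 + (t - r)\<^sup>2)"
        by (intro le_imp_inverse_le) (auto intro: add_pos_nonneg)
      then have "K * inverse (1 + (norm (rot (b + c) (vv r u t)))\<^sup>2) \<le> K * inverse (1 + (t - r)\<^sup>2)"
        using K0 by (rule mult_left_mono)
      then show ?thesis using fb order_trans by blast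
    qed
    have "integrable lborel (\<lambda>x::real. inverse (1 + x\<^sup>2))"
      using integrable_inverse_1_plus_square by (simp add: set_integrable_def)
    then have "integrable lborel (\<lambda>x. inverse (1 + (- r + 1 * x)\<^sup>2))"
      by (rule lborel_integrable_real_affine) simp
    then show "integrable lborel (\<lambda>t. K * inverse (1 + (t - r)\<^sup>2))"
      by (simp add: algebra_simps)
  qed
  also have "\<dots> = (LINT t:{0..}|lborel. circ_avg f (norm (vv r u t)))"
    using rot_avg[OF fc] by simp
  finally show ?thesis .
qed

lemma schwartz_facts:
  assumes "f \<in> schwartz"
  shows "continuous_on UNIV f" "\<exists>K. \<forall>x. \<bar>f x\<bar> \<le> K * inverse (1 + (norm x)\<^sup>2)"
proof -
  have A: "(\<forall>x. f differentiable (at x)) \<and> (\<forall>m n::nat. \<exists>C. \<forall>x. \<bar>(fst x) ^ m * (snd x) ^ n * f x\<bar> \<le> C)"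
  proof -
    have "set [] \<subseteq> coord_dirs" by simp
    then have "(\<forall>x. iter_partial [] f differentiable (at x)) \<and> (\<forall>m n::nat. \<exists>C. \<forall>x. \<bar>(fst x) ^ m * (snd x) ^ n * iter_partial [] f x\<bar> \<le> C)"
      using assms unfolding schwartz_def by blast
    then show ?thesis by simp
  qed
  then show "continuous_on UNIV f"
    by (intro continuous_at_imp_continuous_on ballI differentiable_imp_continuous_within) auto
  obtain C0 where C0: "\<And>x. \<bar>(fst x) ^ 0 * (snd x) ^ 0 * f x\<bar> \<le> C0" using A by blast
  obtain C1 where C1: "\<And>x. \<bar>(fst x) ^ 2 * (snd x) ^ 0 * f x\<bar> \<le> C1" using A by blast
  obtain C2 where C2: "\<And>x. \<bar>(fst x) ^ 0 * (snd x) ^ 2 * f x\<bar> \<le> C2" using A by blast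
  have "\<bar>f x\<bar> \<le> (C0 + C1 + C2) * inverse (1 + (norm x)\<^sup>2)" for x
  proof -
    have n2: "(norm x)\<^sup>2 = (fst x)\<^sup>2 + (snd x)\<^sup>2" by (cases x) (simp add: norm_Pair)
    have "\<bar>f x\<bar> * (1 + (norm x)\<^sup>2) = \<bar>f x\<bar> + \<bar>(fst x)\<^sup>2 * f x\<bar> + \<bar>(snd x)\<^sup>2 * f x\<bar>"
      unfolding n2 by (simp add: abs_mult algebra_simps)
    also have "\<dots> \<le> C0 + C1 + C2" using C0[of x] C1[of x] C2[of x] by simp
    finally have "\<bar>f x\<bar> * (1 + (norm x)\<^sup>2) \<le> C0 + C1 + C2" .
    moreover have "1 + (norm x)\<^sup>2 > 0" by (simp add: add_pos_nonneg)
    ultimately show ?thesis by (simp add: field_simps)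
  qed
  then show "\<exists>K. \<forall>x. \<bar>f x\<bar> \<le> K * inverse (1 + (norm x)\<^sup>2)" by blast
qed

theorem proposition1:
  fixes r h :: real and f :: "real \<times> real \<Rightarrow> real"
  assumes "r > 0" and "f \<in> schwartz"
  shows "let g = fanbeam r f;
             gt = (\<lambda>s b. g (s - h) b);
             pt = (\<lambda>s. integral {0..2*pi} (\<lambda>b. gt s b));
             w = (\<lambda>s. integral {0..2*pi} (\<lambda>b. gt (- s) (b + pi + 2 * arctan (s / r))))
         in \<forall>s. pt s = w (s - 2 * h)"
proof -
  have fc: "continuous_on UNIV f" using schwartz_facts(1)[OF assms(2)] .
  obtain K where fb: "\<And>x. \<bar>f x\<bar> \<le> K * inverse (1 + (norm x)\<^sup>2)"
    using schwartz_facts(2)[OF assms(2)] by blast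
  note key' = key[OF assms(1) fc fb]
  have "integral {0..2*pi} (\<lambda>b. fanbeam r f (s - h) b)
      = integral {0..2*pi} (\<lambda>b. fanbeam r f (- (s - 2 * h) - h) (b + pi + 2 * arctan ((s - 2 * h) / r)))" for s
  proof -
    have "integral {0..2*pi} (\<lambda>b. fanbeam r f (s - h) b)
        = integral {0..2*pi} (\<lambda>b. integral {0..} (\<lambda>t. f (rot (b + 0) (vv r (s - h) t))))"
      using fanbeam_eq[OF assms(1)] by simp
    also have "\<dots> = (LINT t:{0..}|lborel. circ_avg f (norm (vv r (s - h) t)))" by (rule key')
    also have "\<dots> = (LINT t:{0..}|lborel. circ_avg f (norm (vv r (- (s - h)) t)))"
      by (simp only: norm_vv_neg)
    also have "\<dots> = integral {0..2*pi} (\<lambda>b. integral {0..} (\<lambda>t. f (rot (b + (pi + 2 * arctan ((s - 2 * h) / r))) (vv r (- (s - h)) t))))"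
      by (rule key'[symmetric])
    also have "\<dots> = integral {0..2*pi} (\<lambda>b. fanbeam r f (- (s - 2 * h) - h) (b + pi + 2 * arctan ((s - 2 * h) / r)))"
      using fanbeam_eq[OF assms(1)] by (simp add: add.assoc)
    finally show ?thesis .
  qed
  then show ?thesis by (simp add: Let_def)
qed

end
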